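(* Assume the abundance condition (A). Then for every $\boldsymbol m\in[0,1]^2$ an equilibrium exists, and in every equilibrium the machine rental rate is $r^*=F(\boldsymbol m)$ and the wage is $w^*=\max\{\bar w_s,\bar w_b,\bar w_t\}$. Every equilibrium allocation maximizes total output $Y$ over all feasible allocations. Moreover, together with these prices the following allocations form an equilibrium (and, whenever the maximum $\max\{\bar w_s,\bar w_b,\bar w_t\}$ is attained by exactly one of the three numbers, they form the unique equilibrium allocation): (i) if $\boldsymbol m\in R_s$: $\alpha_s^*=1$ and $\mu_s^*=\mu$ (only single-layer firms); (ii) if $\boldsymbol m\in R_b$: $\alpha_b^*=1$, $\mu_b^*=n(\boldsymbol m)$, $\mu_s^*=\mu-\mu_b^*$ (only bottom-automated and single-layer automated firms); (iii) if $\boldsymbol m\in R_t$: $\alpha_t^*=1$, $\mu_t^*=1/n(\boldsymbol h)$, $\mu_s^*=\mu-\mu_t^*$ (only top-automated and single-layer automated firms).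
   Context: Fix a cumulative distribution function $F$ on $[0,1]^2$ with a density $f$ that has full support on $[0,1]^2$; a problem $\boldsymbol x=(x_1,x_2)$ is drawn from $F$. Fix a communication cost $c\in(0,1)$, human knowledge $\boldsymbol h=(h_1,h_2)\in(0,1)^2$ (a unit mass of identical humans, each with one unit of time), and a mass $\mu>0$ of machines, each with one unit of time and common knowledge $\boldsymbol m=(m_1,m_2)\in[0,1]^2$. For $\boldsymbol x,\boldsymbol y\in[0,1]^2$ write $\boldsymbol x\vee\boldsymbol y=(\max\{x_1,y_1\},\max\{x_2,y_2\})$, and for $\boldsymbol x$ with $F(\boldsymbol x)<1$ let $n(\boldsymbol x)=\frac{1}{c(1-F(\boldsymbol x))}$. Given a wage $w\ge 0$ and rental rate $r\ge0$ (output price normalized to 1), there are four firm types with profits: single-layer non-automated (one human): $F(\boldsymbol h)-w$; single-layer automated (one machine): $F(\boldsymbol m)-r$; bottom-automated ($b$: one human solver and $n(\boldsymbol m)$ machine workers; available only when $F(\boldsymbol m)<1$): $\Pi_b=n(\boldsymbol m)[F(\boldsymbol m\vee\boldsymbol h)-r]-w$; top-automated ($t$: one machine solver and $n(\boldsymbol h)$ human workers): $\Pi_t=n(\boldsymbol h)[F(\boldsymbol m\vee\boldsymbol h)-w]-r$. A feasible allocation is $(\alpha_s,\alpha_b,\alpha_t,\mu_s,\mu_b,\mu_t)\ge 0$ (masses of humans in single-layer non-automated, $b$, $t$ firms; masses of machines in single-layer automated, $b$, $t$ firms) with $\mu_b=\alpha_b n(\boldsymbol m)$, $\mu_t=\alpha_t/n(\boldsymbol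 h)$, $\alpha_s+\alpha_b+\alpha_t=1$, $\mu_s+\mu_b+\mu_t=\mu$. Its total output is $Y=\alpha_b n(\boldsymbol m)F(\boldsymbol m\vee\boldsymbol h)+\alpha_tF(\boldsymbol m\vee\boldsymbol h)+\alpha_sF(\boldsymbol h)+\mu_sF(\boldsymbol m)$. An equilibrium is a feasible allocation and prices $(w,r)\ge0$ such that every firm type has nonpositive profit and every firm type used with positive mass earns zero profit. Define $\bar w_s=F(\boldsymbol h)$, $\bar w_b=n(\boldsymbol m)\big(F(\boldsymbol m\vee\boldsymbol h)-F(\boldsymbol m)\big)$ (with $\bar w_b:=0$ if $F(\boldsymbol m)=1$), $\bar w_t=F(\boldsymbol m\vee\boldsymbol h)-F(\boldsymbol m)/n(\boldsymbol h)$, and the regions $R_s=\{\boldsymbol m\in[0,1]^2:\bar w_s\ge\max\{\bar w_b,\bar w_t\}\}$, $R_b=\{\boldsymbol m:\bar w_b>\max\{\bar w_s,\bar w_t\}\}$, $R_t=[0,1]^2\setminus(R_s\cup R_b)$. Abundance condition (A): $\mu>\max\Big\{\frac{1}{c(1-F(1,h_2))},\frac{1}{c(1-F(h_1,1))}\Big\}$. *)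

theory Defs
  imports "HOL-Analysis.Analysis"
begin

definition unit_sq :: "(real \<times> real) set" where
  "unit_sq = {0..1} \<times> {0..1}"

definition is_cdf_with_full_support_density ::
  "(real \<times> real \<Rightarrow> real) \<Rightarrow> (real \<times> real \<Rightarrow> real) \<Rightarrow> bool" where
  "is_cdf_with_full_support_density F f \<longleftrightarrow>
     (\<forall>x\<in>unit_sq. 0 \<le> f x) \<and>
     f integrable_on unit_sq \<and>
     integral unit_sq f = 1 \<and>
     (\<forall>x\<in>unit_sq. \<forall>e>0. 0 < integral (unit_sq \<inter> ball x e) f) \<and>
     (\<forall>x\<in>unit_sq. F x = integral ({0..fst x} \<times> {0..snd x}) f)"

definition vee :: "real \<times> real \<Rightarrow> real \<times> real \<Rightarrow> real \<times> real" where
  "vee x y = (max (fst x) (fst y), max (snd x) (snd y))"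

text \<open>n(x) = 1/(c(1-F(x))) (only meaningful when F x < 1).\<close>
definition nsize :: "(real \<times> real \<Rightarrow> real) \<Rightarrow> real \<Rightarrow> real \<times> real \<Rightarrow> real" where
  "nsize F c x = 1 / (c * (1 - F x))"

definition profit_b :: "(real \<times> real \<Rightarrow> real) \<Rightarrow> real \<Rightarrow> real \<times> real \<Rightarrow> real \<times> real
    \<Rightarrow> real \<Rightarrow> real \<Rightarrow> real" where
  "profit_b F c h m w r = nsize F c m * (F (vee m h) - r) - w"

definition profit_t :: "(real \<times> real \<Rightarrow> real) \<Rightarrow> real \<Rightarrow> real \<times> real \<Rightarrow> real \<times> real
    \<Rightarrow> real \<Rightarrow> real \<Rightarrow> real" where
  "profit_t F c h m w r = nsize F c h * (F (vee m h) - w) - r"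

text \<open>An allocation is (alpha_s, alpha_b, alpha_t, mu_s, mu_b, mu_t).
  Bottom-automated firms are only available when F m < 1; otherwise alpha_b = mu_b = 0.\<close>
type_synonym alloc = "real \<times> real \<times> real \<times> real \<times> real \<times> real"

definition feasible :: "(real \<times> real \<Rightarrow> real) \<Rightarrow> real \<Rightarrow> real \<times> real \<Rightarrow> real \<times> real
    \<Rightarrow> real \<Rightarrow> alloc \<Rightarrow> bool" where
  "feasible F c h m \<mu> a = (case a of (a_s, a_b, a_t, m_s, m_b, m_t) \<Rightarrow>
     0 \<le> a_s \<and> 0 \<le> a_b \<and> 0 \<le> a_t \<and> 0 \<le> m_s \<and> 0 \<le> m_b \<and> 0 \<le> m_t \<and>
     (if F m < 1 then m_b = a_b * nsize F c m else a_b = 0 \<and> m_b = 0) \<and>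
     m_t = a_t / nsize F c h \<and>
     a_s + a_b + a_t = 1 \<and> m_s + m_b + m_t = \<mu>)"

definition total_output :: "(real \<times> real \<Rightarrow> real) \<Rightarrow> real \<Rightarrow> real \<times> real \<Rightarrow> real \<times> real
    \<Rightarrow> alloc \<Rightarrow> real" where
  "total_output F c h m a = (case a of (a_s, a_b, a_t, m_s, m_b, m_t) \<Rightarrow>
     a_b * nsize F c m * F (vee m h) + a_t * F (vee m h) + a_s * F h + m_s * F m)"

definition equilibrium :: "(real \<times> real \<Rightarrow> real) \<Rightarrow> real \<Rightarrow> real \<times> real \<Rightarrow> real \<times> real
    \<Rightarrow> real \<Rightarrow> alloc \<Rightarrow> real \<Rightarrow> real \<Rightarrow> bool" where
  "equilibrium F c h m \<mu> a w r = (case a of (a_s, a_b, a_t, m_s, m_b, m_t) \<Rightarrow>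
     feasible F c h m \<mu> a \<and> 0 \<le> w \<and> 0 \<le> r \<and>
     F h - w \<le> 0 \<and> F m - r \<le> 0 \<and>
     (F m < 1 \<longrightarrow> profit_b F c h m w r \<le> 0) \<and>
     profit_t F c h m w r \<le> 0 \<and>
     (0 < a_s \<longrightarrow> F h - w = 0) \<and>
     (0 < m_s \<longrightarrow> F m - r = 0) \<and>
     (0 < a_b \<longrightarrow> profit_b F c h m w r = 0) \<and>
     (0 < a_t \<longrightarrow> profit_t F c h m w r = 0))"

definition wbar_s :: "(real \<times> real \<Rightarrow> real) \<Rightarrow> real \<Rightarrow> real \<times> real \<Rightarrow> real \<times> real \<Rightarrow> real" where
  "wbar_s F c h m = F h"

definition wbar_b :: "(real \<times> real \<Rightarrow> real) \<Rightarrow> real \<Rightarrow> real \<times> real \<Rightarrow> real \<times> real \<Rightarrow> real" where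
  "wbar_b F c h m = (if F m = 1 then 0 else nsize F c m * (F (vee m h) - F m))"

definition wbar_t :: "(real \<times> real \<Rightarrow> real) \<Rightarrow> real \<Rightarrow> real \<times> real \<Rightarrow> real \<times> real \<Rightarrow> real" where
  "wbar_t F c h m = F (vee m h) - F m / nsize F c h"

definition R_s :: "(real \<times> real \<Rightarrow> real) \<Rightarrow> real \<Rightarrow> real \<times> real \<Rightarrow> (real \<times> real) set" where
  "R_s F c h = {m \<in> unit_sq. wbar_s F c h m \<ge> max (wbar_b F c h m) (wbar_t F c h m)}"

definition R_b :: "(real \<times> real \<Rightarrow> real) \<Rightarrow> real \<Rightarrow> real \<times> real \<Rightarrow> (real \<times> real) set" where
  "R_b F c h = {m \<in> unit_sq. wbar_b F c h m > max (wbar_s F c h m) (wbar_t F c h m)}"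

definition R_t :: "(real \<times> real \<Rightarrow> real) \<Rightarrow> real \<Rightarrow> real \<times> real \<Rightarrow> (real \<times> real) set" where
  "R_t F c h = unit_sq - (R_s F c h \<union> R_b F c h)"

definition unique_max :: "real \<Rightarrow> real \<Rightarrow> real \<Rightarrow> bool" where
  "unique_max a b d \<longleftrightarrow> (a > b \<and> a > d) \<or> (b > a \<and> b > d) \<or> (d > a \<and> d > b)"

end

theory Submission imports Defs begin

lemma F_facts:
  assumes cdf: "is_cdf_with_full_support_density F f"
  shows F_mono: "\<And>x y. x \<in> unit_sq \<Longrightarrow> y \<in> unit_sq \<Longrightarrow> fst x \<le> fst y \<Longrightarrow> snd x \<le> snd y \<Longrightarrow> F x \<le> F y"
    and F_nonneg: "\<And>x. x \<in> unit_sq \<Longrightarrow> 0 \<le> F x"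
    and F_one: "F (1,1) = 1"
proof -
  have nn: "\<forall>x\<in>unit_sq. 0 \<le> f x" and int: "f integrable_on unit_sq" and tot: "integral unit_sq f = 1"
    and Fd: "\<forall>x\<in>unit_sq. F x = integral ({0..fst x} \<times> {0..snd x}) f"
    using cdf unfolding is_cdf_with_full_support_density_def by auto
  have intb: "f integrable_on {0..a} \<times> {0..b}" if "0 \<le> a" "a \<le> 1" "0 \<le> b" "b \<le> 1" for a b :: real
  proof -
    have "cbox (0::real,0::real) (a,b) \<subseteq> unit_sq" using that by (auto simp: unit_sq_def cbox_Pair_eq)
    from integrable_on_subcbox[OF int this] show ?thesis by (simp add: cbox_Pair_eq)
  qed
  show "F (1,1) = 1" using Fd tot by (auto simp: unit_sq_def)
  fix x assume x: "x \<in> unit_sq"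
  then show "0 \<le> F x" using Fd intb[of "fst x" "snd x"] nn
    by (auto simp: unit_sq_def cbox_Pair_eq intro!: integral_nonneg)
next
  fix x y assume x: "x \<in> unit_sq" and y: "y \<in> unit_sq" and le: "fst x \<le> fst y" "snd x \<le> snd y"
  have nn: "\<forall>x\<in>unit_sq. 0 \<le> f x" and int: "f integrable_on unit_sq"
    and Fd: "\<forall>x\<in>unit_sq. F x = integral ({0..fst x} \<times> {0..snd x}) f"
    using cdf unfolding is_cdf_with_full_support_density_def by auto
  have intb: "f integrable_on {0..a} \<times> {0..b}" if "0 \<le> a" "a \<le> 1" "0 \<le> b" "b \<le> 1" for a b :: real
  proof -
    have "cbox (0::real,0::real) (a,b) \<subseteq> unit_sq" using that by (auto simp: unit_sq_def cbox_Pair_eq)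
    from integrable_on_subcbox[OF int this] show ?thesis by (simp add: cbox_Pair_eq)
  qed
  show "F x \<le> F y" using Fd x y le intb[of "fst x" "snd x"] intb[of "fst y" "snd y"] nn
    by (auto simp: unit_sq_def cbox_Pair_eq intro!: integral_subset_le)
qed

lemma F_more:
  assumes cdf: "is_cdf_with_full_support_density F f"
  shows F_pos: "\<And>a b. 0 < a \<Longrightarrow> a \<le> 1 \<Longrightarrow> 0 < b \<Longrightarrow> b \<le> 1 \<Longrightarrow> 0 < F (a,b)"
    and F_lt2: "\<And>b. 0 \<le> b \<Longrightarrow> b < 1 \<Longrightarrow> F (1,b) < 1"
    and F_lt1: "\<And>a. 0 \<le> a \<Longrightarrow> a < 1 \<Longrightarrow> F (a,1) < 1"
proof -
  have nn: "\<forall>x\<in>unit_sq. 0 \<le> f x" and int: "f integrable_on unit_sq" and tot: "integral unit_sq f = 1"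
    and Fd: "\<forall>x\<in>unit_sq. F x = integral ({0..fst x} \<times> {0..snd x}) f"
    and sup: "\<forall>x\<in>unit_sq. \<forall>e>0. 0 < integral (unit_sq \<inter> ball x e) f"
    using cdf unfolding is_cdf_with_full_support_density_def by auto
  have intb: "f integrable_on {0..a} \<times> {0..b}" if "0 \<le> a" "a \<le> 1" "0 \<le> b" "b \<le> 1" for a b :: real
  proof -
    have "cbox (0::real,0::real) (a,b) \<subseteq> unit_sq" using that by (auto simp: unit_sq_def cbox_Pair_eq)
    from integrable_on_subcbox[OF int this] show ?thesis by (simp add: cbox_Pair_eq)
  qed
  have sup': "f integrable_on (unit_sq \<inter> ball x e) \<and> 0 < integral (unit_sq \<inter> ball x e) f"
    if "x \<in> unit_sq" "e > 0" for x e
    using sup that not_integrable_integral by fastforce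
  have dd: "\<bar>fst x - fst y\<bar> \<le> dist x y" "\<bar>snd x - snd y\<bar> \<le> dist x y" for x y :: "real \<times> real"
    using dist_fst_le[of x y] dist_snd_le[of x y] by (auto simp: dist_real_def)
  {
    fix a b :: real assume ab: "0 < a" "a \<le> 1" "0 < b" "b \<le> 1"
    let ?S = "unit_sq \<inter> ball (0,0) (min a b)"
    have S: "f integrable_on ?S" "0 < integral ?S f" using sup'[of "(0,0)" "min a b"] ab
      by (auto simp: unit_sq_def)
    have sub: "?S \<subseteq> {0..a} \<times> {0..b}"
    proof
      fix x assume "x \<in> ?S"
      then show "x \<in> {0..a} \<times> {0..b}" using dd[of "(0,0)" x]
        by (cases x) (auto simp: unit_sq_def)
    qed
    have "integral ?S f \<le> integral ({0..a} \<times> {0..b}) f"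
      using sub S intb[of a b] ab nn by (intro integral_subset_le) (auto simp: unit_sq_def)
    then show "0 < F (a,b)" using Fd ab S by (auto simp: unit_sq_def)
  }
  {
    fix b :: real assume b: "0 \<le> b" "b < 1"
    let ?A = "{0..1::real} \<times> {0..b}"
    let ?B = "unit_sq \<inter> ball (0,1) (1-b)"
    have B: "f integrable_on ?B" "0 < integral ?B f" using sup'[of "(0,1)" "1-b"] b
      by (auto simp: unit_sq_def)
    have A: "f integrable_on ?A" using intb[of 1 b] b by auto
    have disj: "?A \<inter> ?B = {}"
    proof (rule ccontr)
      assume "?A \<inter> ?B \<noteq> {}"
      then obtain x where "x \<in> ?A" "x \<in> ?B" by blast
      then show False using dd[of "(0,1)" x] by (cases x) auto
    qed
    have U: "f integrable_on (?A \<union> ?B)" using integrable_Un[OF _ A B(1)] disj by simp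
    have "integral (?A \<union> ?B) f = integral ?A f + integral ?B f"
      using A B disj by (intro integral_Un) auto
    moreover have "integral (?A \<union> ?B) f \<le> integral unit_sq f"
      using U int nn b by (intro integral_subset_le) (auto simp: unit_sq_def)
    ultimately show "F (1,b) < 1" using Fd b B tot by (auto simp: unit_sq_def)
  }
  {
    fix b :: real assume b: "0 \<le> b" "b < 1"
    let ?A = "{0..b::real} \<times> {0..1}"
    let ?B = "unit_sq \<inter> ball (1,0) (1-b)"
    have B: "f integrable_on ?B" "0 < integral ?B f" using sup'[of "(1,0)" "1-b"] b
      by (auto simp: unit_sq_def)
    have A: "f integrable_on ?A" using intb[of b 1] b by auto
    have disj: "?A \<inter> ?B = {}"
    proof (rule ccontr)
      assume "?A \<inter> ?B \<noteq> {}"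
      then obtain x where "x \<in> ?A" "x \<in> ?B" by blast
      then show False using dd[of "(1,0)" x] by (cases x) auto
    qed
    have U: "f integrable_on (?A \<union> ?B)" using integrable_Un[OF _ A B(1)] disj by simp
    have "integral (?A \<union> ?B) f = integral ?A f + integral ?B f"
      using A B disj by (intro integral_Un) auto
    moreover have "integral (?A \<union> ?B) f \<le> integral unit_sq f"
      using U int nn b by (intro integral_subset_le) (auto simp: unit_sq_def)
    ultimately show "F (b,1) < 1" using Fd b B tot by (auto simp: unit_sq_def)
  }
qed


lemma eq_unf: "equilibrium F c h m \<mu> (s1,b1,t1,s2,b2,t2) w r \<longleftrightarrow>
     (0 \<le> s1 \<and> 0 \<le> b1 \<and> 0 \<le> t1 \<and> 0 \<le> s2 \<and> 0 \<le> b2 \<and> 0 \<le> t2 \<and>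
     (if F m < 1 then b2 = b1 * nsize F c m else b1 = 0 \<and> b2 = 0) \<and>
     t2 = t1 / nsize F c h \<and>
     s1 + b1 + t1 = 1 \<and> s2 + b2 + t2 = \<mu>) \<and> 0 \<le> w \<and> 0 \<le> r \<and>
     F h - w \<le> 0 \<and> F m - r \<le> 0 \<and>
     (F m < 1 \<longrightarrow> profit_b F c h m w r \<le> 0) \<and>
     profit_t F c h m w r \<le> 0 \<and>
     (0 < s1 \<longrightarrow> F h - w = 0) \<and>
     (0 < s2 \<longrightarrow> F m - r = 0) \<and>
     (0 < b1 \<longrightarrow> profit_b F c h m w r = 0) \<and>
     (0 < t1 \<longrightarrow> profit_t F c h m w r = 0)"
  by (simp add: equilibrium_def feasible_def)

locale mkt =
  fixes F :: "real \<times> real \<Rightarrow> real" and c p q v nm nh \<mu> :: real and m h :: "real \<times> real"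
  assumes c: "0 < c" "c < 1"
    and Fm: "F m = p" and Fh: "F h = q" and Fv: "F (vee m h) = v"
    and nmd: "nsize F c m = nm" and nhd: "nsize F c h = nh"
    and p: "0 \<le> p" "p \<le> 1" and q: "0 < q" "q < 1" and mu: "1 < \<mu>"
    and vp: "p \<le> v"
    and A2: "p < 1 \<Longrightarrow> p < v \<Longrightarrow> nm < \<mu>"
begin

lemma nmv: "p < 1 \<Longrightarrow> nm = 1 / (c * (1 - p))" using nmd Fm by (simp add: nsize_def)
lemma nhv: "nh = 1 / (c * (1 - q))" using nhd Fh by (simp add: nsize_def)
lemma nhpos: "nh > 0" using nhv c q by simp
lemma inh: "1 / nh = c * (1 - q)" using nhv by simp
lemma inh1: "1 / nh < 1" using inh c q by (smt (verit, best) mult_left_le mult_less_cancel_right1)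
lemma nmpos: "p < 1 \<Longrightarrow> nm > 0" using nmv c by simp
lemma wb: "wbar_b F c h m = (if p = 1 then 0 else nm * (v - p))" by (simp add: wbar_b_def Fm Fv nmd)
lemma wt: "wbar_t F c h m = v - p / nh" by (simp add: wbar_t_def Fm Fv nhd)
lemma ws: "wbar_s F c h m = q" by (simp add: wbar_s_def Fh)

lemma pt: "profit_t F c h m w p = nh * (wbar_t F c h m - w)"
  using nhpos by (simp add: profit_t_def Fv nhd wt algebra_simps)
lemma pb: "p < 1 \<Longrightarrow> profit_b F c h m w p = wbar_b F c h m - w"
  by (simp add: profit_b_def Fv nmd Fm wb)

lemma prices:
  assumes E: "equilibrium F c h m \<mu> a w r"
  shows "r = p \<and> w = max q (max (wbar_b F c h m) (wbar_t F c h m))"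
proof -
  obtain s1 b1 t1 s2 b2 t2 where a: "a = (s1,b1,t1,s2,b2,t2)" by (cases a) auto
  note E' = E[unfolded a eq_unf Fm Fh Fv nmd nhd profit_b_def profit_t_def]
  have t2e: "t2 = t1 * (1/nh)" and t1nn: "0 \<le> t1" using E' by auto
  have t2le: "t2 \<le> t1" unfolding t2e using mult_left_mono[of "1/nh" 1 t1] t1nn inh1 by simp
  have s2pos: "s2 > 0"
  proof (rule ccontr)
    assume "\<not> s2 > 0"
    then have s20: "s2 = 0" using E' by auto
    show False
    proof (cases "p < 1")
      case False
      then show False using E' s20 t2le mu by auto
    next
      case True
      then have b2: "b2 = b1 * nm" using E' by auto
      show False
      proof (cases "b1 > 0")
        case False
        then show False using E' s20 t2le mu b2 by auto
      next
        case b1: True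
        have "nm \<ge> \<mu>"
        proof (rule ccontr)
          assume "\<not> nm \<ge> \<mu>"
          then have "b1 * nm < b1 * \<mu>" using b1 by simp
          moreover have "b1 * \<mu> + t1 \<le> \<mu>"
          proof -
            have "b1 + t1 \<le> 1" "0 \<le> s1" using E' by auto
            then have "(b1 + t1) * \<mu> \<le> \<mu>" using mu by (simp add: mult_left_le_one_le)
            moreover have "t1 \<le> t1 * \<mu>" using t1nn mu by (simp add: mult_le_cancel_left1)
            ultimately show ?thesis by (simp add: algebra_simps)
          qed
          ultimately show False using E' s20 t2le b2 by linarith
        qed
        then have "v = p" using A2 True vp by force
        then have "nm * (p - r) - w = 0" using E' b1 by auto
        moreover have "nm * (p - r) \<le> 0" using E' nmpos True
          by (simp add: mult_nonneg_nonpos)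
        ultimately show False using E' q by linarith
      qed
    qed
  qed
  then have r: "r = p" using E' by auto
  have lb1: "q \<le> w" using E' by auto
  have lb2: "wbar_b F c h m \<le> w"
  proof (cases "p < 1")
    case True
    then have "nm * (v - r) - w \<le> 0" using E' by auto
    then show ?thesis using wb r True by auto
  next
    case False
    then show ?thesis using wb p E' by auto
  qed
  have lb3: "wbar_t F c h m \<le> w"
  proof -
    have "nh * (v - w) \<le> p" using E' r by auto
    then have "v - w \<le> p / nh" using nhpos by (simp add: field_simps)
    then show ?thesis using wt by simp
  qed
  have act: "w = q \<or> w = wbar_b F c h m \<or> w = wbar_t F c h m"
  proof -
    have "s1 > 0 \<or> b1 > 0 \<or> t1 > 0" using E' by auto
    moreover have "s1 > 0 \<Longrightarrow> w = q" using E' by auto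
    moreover have "b1 > 0 \<Longrightarrow> w = wbar_b F c h m"
    proof -
      assume b1: "b1 > 0"
      then have "p < 1" using E' by (auto split: if_splits)
      then show ?thesis using E' b1 r wb by auto
    qed
    moreover have "t1 > 0 \<Longrightarrow> w = wbar_t F c h m"
    proof -
      assume t1: "t1 > 0"
      then have "nh * (v - w) = p" using E' r by auto
      then have "v - w = p / nh" using nhpos by (simp add: field_simps)
      then show ?thesis using wt by simp
    qed
    ultimately show ?thesis by blast
  qed
  show ?thesis using r lb1 lb2 lb3 act by linarith
qed

lemma active:
  assumes E: "equilibrium F c h m \<mu> (s1,b1,t1,s2,b2,t2) w r"
  shows "(s1 > 0 \<longrightarrow> q = w) \<and> (b1 > 0 \<longrightarrow> wbar_b F c h m = w) \<and> (t1 > 0 \<longrightarrow> wbar_t F c h m = w)"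
proof -
  have r: "r = p" using prices[OF E] by simp
  note E' = E[unfolded eq_unf Fm Fh Fv nmd nhd profit_b_def profit_t_def]
  have "s1 > 0 \<Longrightarrow> w = q" using E' by auto
  moreover have "b1 > 0 \<Longrightarrow> w = wbar_b F c h m"
  proof -
    assume b1: "b1 > 0"
    then have "p < 1" using E' by (auto split: if_splits)
    then show ?thesis using E' b1 r wb by auto
  qed
  moreover have "t1 > 0 \<Longrightarrow> w = wbar_t F c h m"
  proof -
    assume t1: "t1 > 0"
    then have "nh * (v - w) = p" using E' r by auto
    then have "v - w = p / nh" using nhpos by (simp add: field_simps)
    then show ?thesis using wt by simp
  qed
  ultimately show ?thesis by auto
qed

lemma output_eq:
  assumes "feasible F c h m \<mu> (s1,b1,t1,s2,b2,t2)"
  shows "total_output F c h m (s1,b1,t1,s2,b2,t2) = \<mu> * p + s1 * q + b1 * wbar_b F c h m + t1 * wbar_t F c h m"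
proof (cases "p < 1")
  case True
  then have e: "b2 = b1 * nm" "t2 = t1 / nh" "s2 = \<mu> - b2 - t2" using assms
    by (auto simp: feasible_def Fm nmd nhd)
  show ?thesis using True nhpos unfolding total_output_def wb wt
    by (simp add: e Fm Fh Fv nmd algebra_simps)
next
  case False
  then have e: "b1 = 0" "b2 = 0" "t2 = t1 / nh" "s2 = \<mu> - b2 - t2" using assms
    by (auto simp: feasible_def Fm nmd nhd)
  show ?thesis using False nhpos unfolding total_output_def wb wt
    by (simp add: e Fm Fh Fv nmd algebra_simps)
qed

lemma efficient:
  assumes E: "equilibrium F c h m \<mu> a w r" and f: "feasible F c h m \<mu> a'"
  shows "total_output F c h m a' \<le> total_output F c h m a"
proof -
  obtain s1 b1 t1 s2 b2 t2 where a: "a = (s1,b1,t1,s2,b2,t2)" by (cases a) auto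
  obtain s1' b1' t1' s2' b2' t2' where a': "a' = (s1',b1',t1',s2',b2',t2')" by (cases a') auto
  let ?ws = "max q (max (wbar_b F c h m) (wbar_t F c h m))"
  have w: "w = ?ws" using prices[OF E] by simp
  have Ef: "feasible F c h m \<mu> a" using E by (simp add: equilibrium_def a)
  have act: "(s1 > 0 \<longrightarrow> q = w) \<and> (b1 > 0 \<longrightarrow> wbar_b F c h m = w) \<and> (t1 > 0 \<longrightarrow> wbar_t F c h m = w)"
    using active E a by simp
  have fe: "0 \<le> s1" "0 \<le> b1" "0 \<le> t1" "s1 + b1 + t1 = 1" using Ef a by (auto simp: feasible_def)
  have fe': "0 \<le> s1'" "0 \<le> b1'" "0 \<le> t1'" "s1' + b1' + t1' = 1" using f a' by (auto simp: feasible_def)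
  have x1: "s1 * q = s1 * w" using act fe by (cases "s1 > 0") auto
  have x2: "b1 * wbar_b F c h m = b1 * w" using act fe by (cases "b1 > 0") auto
  have x3: "t1 * wbar_t F c h m = t1 * w" using act fe by (cases "t1 > 0") auto
  have Ya: "total_output F c h m a = \<mu> * p + w"
  proof -
    have "total_output F c h m a = \<mu> * p + s1 * q + b1 * wbar_b F c h m + t1 * wbar_t F c h m"
      using output_eq[of s1 b1 t1 s2 b2 t2] Ef a by simp
    also have "\<dots> = \<mu> * p + s1 * w + b1 * w + t1 * w" by (simp only: x1 x2 x3)
    also have "\<dots> = \<mu> * p + (s1 + b1 + t1) * w" by (simp add: algebra_simps)
    finally show ?thesis using fe(4) by simp
  qed
  have "s1' * q \<le> s1' * w" "b1' * wbar_b F c h m \<le> b1' * w" "t1' * wbar_t F c h m \<le> t1' * w"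
    using fe' w by (auto intro!: mult_left_mono)
  then have "total_output F c h m a' \<le> \<mu> * p + (s1' + b1' + t1') * w"
    using output_eq[of s1' b1' t1' s2' b2' t2'] f a' by (simp add: algebra_simps)
  then show ?thesis using Ya fe' by simp
qed


lemma reg_s:
  assumes R: "m \<in> R_s F c h"
  shows "equilibrium F c h m \<mu> (1, 0, 0, \<mu>, 0, 0) (max q (max (wbar_b F c h m) (wbar_t F c h m))) p \<and>
          (unique_max q (wbar_b F c h m) (wbar_t F c h m) \<longrightarrow>
             (\<forall>a w r. equilibrium F c h m \<mu> a w r \<longrightarrow> a = (1, 0, 0, \<mu>, 0, 0)))"
proof -
  let ?b = "wbar_b F c h m" and ?t = "wbar_t F c h m"
  have ge: "q \<ge> ?b" "q \<ge> ?t" using R by (auto simp: R_s_def ws)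
  have ws: "max q (max ?b ?t) = q" using ge by simp
  have E: "equilibrium F c h m \<mu> (1, 0, 0, \<mu>, 0, 0) q p"
    unfolding eq_unf using ge p q mu nhpos pt[of q] pb[of q] mult_nonpos_nonpos[of nh "?t - q"]
    by (auto simp: Fm Fh mult_le_0_iff)
  moreover have U2: "\<forall>a w r. equilibrium F c h m \<mu> a w r \<longrightarrow> a = (1, 0, 0, \<mu>, 0, 0)"
    if U: "unique_max q ?b ?t"
  proof (intro allI impI)
    fix a w r assume E: "equilibrium F c h m \<mu> a w r"
    obtain s1 b1 t1 s2 b2 t2 where a: "a = (s1,b1,t1,s2,b2,t2)" by (cases a) auto
    have w: "w = q" using prices[OF E] ws by simp
    have gt: "q > ?b" "q > ?t" using U ge unfolding unique_max_def by auto
    have act: "(b1 > 0 \<longrightarrow> ?b = w) \<and> (t1 > 0 \<longrightarrow> ?t = w)" using active E a by simp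
    note E' = E[unfolded a eq_unf]
    have "b1 = 0" "t1 = 0" using act gt w E' by force+
    then show "a = (1, 0, 0, \<mu>, 0, 0)" using E' a by (auto split: if_splits)
  qed
  ultimately show ?thesis unfolding ws by blast
qed

lemma reg_b:
  assumes R: "m \<in> R_b F c h"
  shows "equilibrium F c h m \<mu> (0, 1, 0, \<mu> - nm, nm, 0) (max q (max (wbar_b F c h m) (wbar_t F c h m))) p \<and>
          (unique_max q (wbar_b F c h m) (wbar_t F c h m) \<longrightarrow>
             (\<forall>a w r. equilibrium F c h m \<mu> a w r \<longrightarrow> a = (0, 1, 0, \<mu> - nm, nm, 0)))"
proof -
  let ?b = "wbar_b F c h m" and ?t = "wbar_t F c h m"
  have gt: "?b > q" "?b > ?t" using R by (auto simp: R_b_def ws)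
  have ws: "max q (max ?b ?t) = ?b" using gt by simp
  have p1: "p < 1" using gt q p wb by (cases "p = 1") auto
  have bv: "?b = nm * (v - p)" using wb p1 by simp
  have "v > p" using gt q nmpos[OF p1] bv by (smt (verit) mult_le_0_iff)
  then have nmmu: "nm < \<mu>" using A2 p1 by simp
  have E: "equilibrium F c h m \<mu> (0, 1, 0, \<mu> - nm, nm, 0) ?b p"
    unfolding eq_unf using gt p q mu nhpos p1 nmpos[OF p1] nmmu pt[of ?b] pb[of ?b] mult_nonpos_nonpos[of nh "?t - ?b"]
    by (auto simp: Fm Fh nmd nhd mult_le_0_iff)
  moreover have U2: "\<forall>a w r. equilibrium F c h m \<mu> a w r \<longrightarrow> a = (0, 1, 0, \<mu> - nm, nm, 0)"
  proof (intro allI impI)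
    fix a w r assume E: "equilibrium F c h m \<mu> a w r"
    obtain s1 b1 t1 s2 b2 t2 where a: "a = (s1,b1,t1,s2,b2,t2)" by (cases a) auto
    have w: "w = ?b" using prices[OF E] ws by simp
    have act: "(s1 > 0 \<longrightarrow> q = w) \<and> (t1 > 0 \<longrightarrow> ?t = w)" using active E a by simp
    note E' = E[unfolded a eq_unf Fm]
    have "s1 = 0" "t1 = 0" using act gt w E' by force+
    then show "a = (0, 1, 0, \<mu> - nm, nm, 0)" using E' a p1 nmd by (auto split: if_splits)
  qed
  ultimately show ?thesis unfolding ws by blast
qed

lemma reg_t:
  assumes R: "m \<in> R_t F c h" and U: "m \<in> unit_sq"
  shows "equilibrium F c h m \<mu> (0, 0, 1, \<mu> - 1 / nh, 0, 1 / nh) (max q (max (wbar_b F c h m) (wbar_t F c h m))) p \<and>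
          (unique_max q (wbar_b F c h m) (wbar_t F c h m) \<longrightarrow>
             (\<forall>a w r. equilibrium F c h m \<mu> a w r \<longrightarrow> a = (0, 0, 1, \<mu> - 1 / nh, 0, 1 / nh)))"
proof -
  let ?b = "wbar_b F c h m" and ?t = "wbar_t F c h m"
  have n1: "\<not> q \<ge> max ?b ?t" "\<not> ?b > max q ?t" using R U by (auto simp: R_t_def R_s_def R_b_def ws)
  have gt: "?t > q" "?t \<ge> ?b" using n1 by auto
  have ws: "max q (max ?b ?t) = ?t" using gt by simp
  have imu: "1 / nh \<le> \<mu>" using inh1 mu by linarith
  have E: "equilibrium F c h m \<mu> (0, 0, 1, \<mu> - 1 / nh, 0, 1 / nh) ?t p"
    unfolding eq_unf using gt p q mu nhpos imu pt[of ?t] pb[of ?t]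
    by (auto simp: Fm Fh nmd nhd)
  moreover have U2: "\<forall>a w r. equilibrium F c h m \<mu> a w r \<longrightarrow> a = (0, 0, 1, \<mu> - 1 / nh, 0, 1 / nh)"
    if UM: "unique_max q ?b ?t"
  proof (intro allI impI)
    fix a w r assume E: "equilibrium F c h m \<mu> a w r"
    obtain s1 b1 t1 s2 b2 t2 where a: "a = (s1,b1,t1,s2,b2,t2)" by (cases a) auto
    have w: "w = ?t" using prices[OF E] ws by simp
    have gt2: "?t > ?b" using UM gt unfolding unique_max_def by auto
    have act: "(s1 > 0 \<longrightarrow> q = w) \<and> (b1 > 0 \<longrightarrow> ?b = w)" using active E a by simp
    note E' = E[unfolded a eq_unf Fm nhd]
    have "s1 = 0" "b1 = 0" using act gt gt2 w E' by force+
    then show "a = (0, 0, 1, \<mu> - 1 / nh, 0, 1 / nh)" using E' a by (auto split: if_splits)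
  qed
  ultimately show ?thesis unfolding ws by blast
qed


end

theorem proposition1:
  fixes F f :: "real \<times> real \<Rightarrow> real" and c \<mu> :: real and h :: "real \<times> real"
  assumes cdf: "is_cdf_with_full_support_density F f"
    and c: "0 < c" "c < 1"
    and h: "0 < fst h" "fst h < 1" "0 < snd h" "snd h < 1"
    and mu: "0 < \<mu>"
    and A: "\<mu> > max (1 / (c * (1 - F (1, snd h)))) (1 / (c * (1 - F (fst h, 1))))"
  shows "\<forall>m \<in> unit_sq.
    (let ws = wbar_s F c h m; wb = wbar_b F c h m; wt = wbar_t F c h m;
         wstar = max ws (max wb wt) in
      (\<exists>a w r. equilibrium F c h m \<mu> a w r) \<and>
      (\<forall>a w r. equilibrium F c h m \<mu> a w r \<longrightarrow> r = F m \<and> w = wstar) \<and>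
      (\<forall>a w r. equilibrium F c h m \<mu> a w r \<longrightarrow>
          (\<forall>a'. feasible F c h m \<mu> a' \<longrightarrow> total_output F c h m a' \<le> total_output F c h m a)) \<and>
      (m \<in> R_s F c h \<longrightarrow>
          equilibrium F c h m \<mu> (1, 0, 0, \<mu>, 0, 0) wstar (F m) \<and>
          (unique_max ws wb wt \<longrightarrow>
             (\<forall>a w r. equilibrium F c h m \<mu> a w r \<longrightarrow> a = (1, 0, 0, \<mu>, 0, 0)))) \<and>
      (m \<in> R_b F c h \<longrightarrow>
          equilibrium F c h m \<mu> (0, 1, 0, \<mu> - nsize F c m, nsize F c m, 0) wstar (F m) \<and>
          (unique_max ws wb wt \<longrightarrow>
             (\<forall>a w r. equilibrium F c h m \<mu> a w r \<longrightarrow>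
                a = (0, 1, 0, \<mu> - nsize F c m, nsize F c m, 0)))) \<and>
      (m \<in> R_t F c h \<longrightarrow>
          equilibrium F c h m \<mu> (0, 0, 1, \<mu> - 1 / nsize F c h, 0, 1 / nsize F c h) wstar (F m) \<and>
          (unique_max ws wb wt \<longrightarrow>
             (\<forall>a w r. equilibrium F c h m \<mu> a w r \<longrightarrow>
                a = (0, 0, 1, \<mu> - 1 / nsize F c h, 0, 1 / nsize F c h)))))"
proof (intro ballI)
  fix m assume mU: "m \<in> unit_sq"
  have h01: "h \<in> unit_sq" using h by (cases h) (auto simp: unit_sq_def)
  have mb: "0 \<le> fst m" "fst m \<le> 1" "0 \<le> snd m" "snd m \<le> 1" using mU by (auto simp: unit_sq_def mem_Times_iff)
  have vU: "vee m h \<in> unit_sq" using mb h by (auto simp: unit_sq_def vee_def)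
  have one: "(1::real,1::real) \<in> unit_sq" by (auto simp: unit_sq_def)
  have p0: "0 \<le> F m" using F_nonneg[OF cdf mU] .
  have p1: "F m \<le> 1" using F_mono[OF cdf mU one] mb F_one[OF cdf] by simp
  define K1 where "K1 = F (1, snd h)"
  define K2 where "K2 = F (fst h, 1)"
  have K1: "0 \<le> K1" "K1 < 1" unfolding K1_def using F_nonneg[OF cdf, of "(1, snd h)"] F_lt2[OF cdf, of "snd h"] h
    by (auto simp: unit_sq_def)
  have K2: "0 \<le> K2" "K2 < 1" unfolding K2_def using F_nonneg[OF cdf, of "(fst h, 1)"] F_lt1[OF cdf, of "fst h"] h
    by (auto simp: unit_sq_def)
  have q0: "0 < F h" using F_pos[OF cdf, of "fst h" "snd h"] h by simp
  have q1: "F h < 1"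
  proof -
    have "F h \<le> K1" unfolding K1_def using F_mono[OF cdf h01, of "(1, snd h)"] h by (auto simp: unit_sq_def)
    then show ?thesis using K1 by simp
  qed
  have inv_mono: "1 / (c * (1 - x)) \<le> 1 / (c * (1 - y))" if "x \<le> y" "y < 1" for x y :: real
  proof -
    have "0 < c * (1 - y)" using c that by simp
    moreover have "c * (1 - y) \<le> c * (1 - x)" using c that by simp
    ultimately show ?thesis by (simp add: frac_le)
  qed
  have mu1: "1 < \<mu>"
  proof -
    have "c * (1 - K1) \<le> c" using c K1 mult_left_le[of "1 - K1" c] by simp
    then have "c * (1 - K1) < 1" using c by linarith
    moreover have "0 < c * (1 - K1)" using c K1 by simp
    ultimately have "1 < 1 / (c * (1 - K1))" by simp
    then show ?thesis using A K1_def by simp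
  qed
  have vp: "F m \<le> F (vee m h)" using F_mono[OF cdf mU vU] by (simp add: vee_def)
  have A2: "nsize F c m < \<mu>" if "F m < 1" "F m < F (vee m h)"
  proof -
    have "\<not> (fst h \<le> fst m \<and> snd h \<le> snd m)"
    proof
      assume "fst h \<le> fst m \<and> snd h \<le> snd m"
      then have "vee m h = m" by (cases m) (auto simp: vee_def)
      then show False using that by simp
    qed
    then consider "fst m < fst h" | "snd m < snd h" by linarith
    then show ?thesis
    proof cases
      case 1
      then have "F m \<le> K2" unfolding K2_def using F_mono[OF cdf mU, of "(fst h, 1)"] h mb
        by (auto simp: unit_sq_def)
      then have "nsize F c m \<le> 1 / (c * (1 - K2))" unfolding nsize_def using inv_mono K2 by simp
      then show ?thesis using A K2_def by simp
    next
      case 2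
      then have "F m \<le> K1" unfolding K1_def using F_mono[OF cdf mU, of "(1, snd h)"] h mb
        by (auto simp: unit_sq_def)
      then have "nsize F c m \<le> 1 / (c * (1 - K1))" unfolding nsize_def using inv_mono K1 by simp
      then show ?thesis using A K1_def by simp
    qed
  qed
  interpret M: mkt F c "F m" "F h" "F (vee m h)" "nsize F c m" "nsize F c h" \<mu> m h
  proof (unfold_locales)
    show "F m < 1 \<Longrightarrow> F m < F (vee m h) \<Longrightarrow> nsize F c m < \<mu>" by (rule A2)
  qed (use c p0 p1 q0 q1 mu1 vp in auto)
  have ws: "wbar_s F c h m = F h" by (simp add: wbar_s_def)
  have ex: "\<exists>a w r. equilibrium F c h m \<mu> a w r"
  proof -
    consider (s) "m \<in> R_s F c h" | (b) "m \<in> R_b F c h" | (t) "m \<in> R_t F c h"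
      using mU by (auto simp: R_t_def)
    then show ?thesis
    proof cases
      case s
      then show ?thesis using M.reg_s[OF s] by blast
    next
      case b
      then show ?thesis using M.reg_b[OF b] by blast
    next
      case t
      then show ?thesis using M.reg_t[OF t mU] by blast
    qed
  qed
  show "let ws = wbar_s F c h m; wb = wbar_b F c h m; wt = wbar_t F c h m;
         wstar = max ws (max wb wt) in
      (\<exists>a w r. equilibrium F c h m \<mu> a w r) \<and>
      (\<forall>a w r. equilibrium F c h m \<mu> a w r \<longrightarrow> r = F m \<and> w = wstar) \<and>
      (\<forall>a w r. equilibrium F c h m \<mu> a w r \<longrightarrow>
          (\<forall>a'. feasible F c h m \<mu> a' \<longrightarrow> total_output F c h m a' \<le> total_output F c h m a)) \<and>
      (m \<in> R_s F c h \<longrightarrow>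
          equilibrium F c h m \<mu> (1, 0, 0, \<mu>, 0, 0) wstar (F m) \<and>
          (unique_max ws wb wt \<longrightarrow>
             (\<forall>a w r. equilibrium F c h m \<mu> a w r \<longrightarrow> a = (1, 0, 0, \<mu>, 0, 0)))) \<and>
      (m \<in> R_b F c h \<longrightarrow>
          equilibrium F c h m \<mu> (0, 1, 0, \<mu> - nsize F c m, nsize F c m, 0) wstar (F m) \<and>
          (unique_max ws wb wt \<longrightarrow>
             (\<forall>a w r. equilibrium F c h m \<mu> a w r \<longrightarrow>
                a = (0, 1, 0, \<mu> - nsize F c m, nsize F c m, 0)))) \<and>
      (m \<in> R_t F c h \<longrightarrow>
          equilibrium F c h m \<mu> (0, 0, 1, \<mu> - 1 / nsize F c h, 0, 1 / nsize F c h) wstar (F m) \<and>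
          (unique_max ws wb wt \<longrightarrow>
             (\<forall>a w r. equilibrium F c h m \<mu> a w r \<longrightarrow>
                a = (0, 0, 1, \<mu> - 1 / nsize F c h, 0, 1 / nsize F c h))))"
    unfolding Let_def ws
    apply (intro conjI)
    subgoal by (rule ex)
    subgoal using M.prices by blast
    subgoal using M.efficient by blast
    subgoal by (intro impI, rule M.reg_s)
    subgoal by (intro impI, rule M.reg_b)
    subgoal by (intro impI, rule M.reg_t[OF _ mU])
    done
qed

end
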